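(* Let $t_f>0$, let $S\subset\mathbb R^3$ be a finite set of source points and $C$ a finite set of $N_C\ge1$ QBX centers, each $c\in C$ having an expansion radius $r_c>0$ and being owned by a box $b_c$ of an octree with $c\in b_c$. Define $M_C:=\frac1{N_C}\sum_{c\in C}\big|S\cap\{x:|x-c|_\infty\le4\sqrt3\,r_c/t_f\}\big|$. Then the number of pairs $(s,c)\in S\times C$ such that $c$ is suspended in $b_c$ and $s$ lies in the $2$-near neighborhood of $b_c$ is at most $N_CM_C$.
   Context: An octree is a rooted tree of axis-aligned closed cubes ("boxes") in $\mathbb R^3$. For a box $b$, $|b|$ denotes its $\ell^\infty$ radius and $c_b$ its center. The $k$-near neighborhood of $b$ is the closed cube $\{x:|x-c_b|_\infty\le|b|(1+2k)\}$. $\mathsf{TCR}(b)$ is the closed Euclidean ball of radius $\sqrt3|b|(1+t_f)$ centered at $c_b$. A center $c\in b$ with radius $r_c$ is suspended in $b$ if for every one of the eight cubes $b'$ of radius $|b|/2$ obtained by bisecting $b$ along each axis that contains $c$, the closed Euclidean ball $\{x:|x-c|_2\le r_c\}$ is not contained in $\mathsf{TCR}(b')$. *)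

theory Defs
  imports "HOL-Analysis.Analysis"
begin

text \<open>A box (axis-aligned closed cube) in R^3 is represented by its center and its
  l-infinity radius.\<close>
type_synonym box = "(real^3) \<times> real"

definition box_center :: "box \<Rightarrow> real^3" where "box_center b = fst b"
definition box_radius :: "box \<Rightarrow> real" where "box_radius b = snd b"

definition box_set :: "box \<Rightarrow> (real^3) set" where
  "box_set b = {x. infnorm (x - box_center b) \<le> box_radius b}"

definition near_nbhd :: "real \<Rightarrow> box \<Rightarrow> (real^3) set" where
  "near_nbhd k b = {x. infnorm (x - box_center b) \<le> box_radius b * (1 + 2 * k)}"

definition TCR :: "real \<Rightarrow> box \<Rightarrow> (real^3) set" where
  "TCR t_f b = cball (box_center b) (sqrt 3 * box_radius b * (1 + t_f))"

definition children :: "box \<Rightarrow> box set" where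
  "children b = {(box_center b + (box_radius b / 2) *\<^sub>R \<sigma>, box_radius b / 2) | \<sigma>::real^3.
                   \<forall>i. \<sigma> $ i \<in> {-1, 1}}"

definition suspended :: "real \<Rightarrow> real^3 \<Rightarrow> real \<Rightarrow> box \<Rightarrow> bool" where
  "suspended t_f c r_c b \<longleftrightarrow> c \<in> box_set b \<and>
     (\<forall>b'\<in>children b. c \<in> box_set b' \<longrightarrow> \<not> (cball c r_c \<subseteq> TCR t_f b'))"

definition M_C :: "real \<Rightarrow> (real^3) set \<Rightarrow> (real^3) set \<Rightarrow> (real^3 \<Rightarrow> real) \<Rightarrow> real" where
  "M_C t_f S C r = (1 / real (card C)) *
     (\<Sum>c\<in>C. real (card (S \<inter> {x. infnorm (x - c) \<le> 4 * sqrt 3 * r c / t_f})))"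

end

theory Submission
  imports Defs
begin

lemma infnorm_le_cart: "(\<And>i. \<bar>(x::real^'n)$i\<bar> \<le> a) \<Longrightarrow> infnorm x \<le> a"
  unfolding infnorm_cart by (rule cSup_least) auto

lemma norm_le_3inf: "norm (x::real^3) \<le> sqrt 3 * infnorm x"
  using norm_le_infnorm[of x] by simp

lemma susp_bound:
  assumes tf: "t_f > 0" and R: "box_radius b > 0" and s: "suspended t_f c rc b"
  shows "sqrt 3 * box_radius b * t_f / 2 < rc"
proof (rule ccontr)
  assume nl: "\<not> ?thesis"
  define R where "R = box_radius b"
  define cb where "cb = box_center b"
  have cin: "infnorm (c - cb) \<le> R" using s unfolding suspended_def box_set_def R_def cb_def by auto
  define \<sigma> :: "real^3" where "\<sigma> = (\<chi> i. if c$i \<ge> cb$i then 1 else -1)"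
  define b' where "b' = (cb + (R/2) *\<^sub>R \<sigma>, R/2)"
  have ch: "b' \<in> children b" unfolding children_def b'_def R_def cb_def \<sigma>_def
    by (rule CollectI, rule exI[of _ "(\<chi> i. if c$i \<ge> box_center b$i then 1 else -1)"]) auto
  have ci: "infnorm (c - (cb + (R/2) *\<^sub>R \<sigma>)) \<le> R/2"
  proof (rule infnorm_le_cart)
    fix i
    have "\<bar>(c - cb)$i\<bar> \<le> R" using component_le_infnorm_cart[of "c - cb" i] cin by linarith
    then show "\<bar>(c - (cb + (R/2) *\<^sub>R \<sigma>))$i\<bar> \<le> R/2"
      unfolding \<sigma>_def by (auto simp: abs_if split: if_splits)
  qed
  have cb': "c \<in> box_set b'" using ci unfolding box_set_def b'_def box_center_def box_radius_def by simp
  have "cball c rc \<subseteq> TCR t_f b'"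
  proof
    fix y assume y: "y \<in> cball c rc"
    have "dist (cb + (R/2) *\<^sub>R \<sigma>) y \<le> dist (cb + (R/2) *\<^sub>R \<sigma>) c + dist c y" by (rule dist_triangle)
    also have "dist (cb + (R/2) *\<^sub>R \<sigma>) c \<le> sqrt 3 * (R/2)"
    proof -
      have "dist (cb + (R/2) *\<^sub>R \<sigma>) c = norm (c - (cb + (R/2) *\<^sub>R \<sigma>))" by (simp add: dist_norm norm_minus_commute)
      also have "\<dots> \<le> sqrt 3 * infnorm (c - (cb + (R/2) *\<^sub>R \<sigma>))" by (rule norm_le_3inf)
      also have "\<dots> \<le> sqrt 3 * (R/2)" using ci by (simp add: mult_left_mono)
      finally show ?thesis .
    qed
    finally have "dist (cb + (R/2) *\<^sub>R \<sigma>) y \<le> sqrt 3 * (R/2) + rc" using y by simp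
    also have "\<dots> \<le> sqrt 3 * (R/2) * (1 + t_f)" using nl unfolding R_def by (simp add: algebra_simps)
    finally show "y \<in> TCR t_f b'" unfolding TCR_def b'_def box_center_def box_radius_def by simp
  qed
  with s ch cb' show False unfolding suspended_def by blast
qed

lemma near_sub:
  assumes tf: "t_f > 0" and R: "box_radius b > 0" and s: "suspended t_f c rc b"
    and x: "x \<in> near_nbhd 2 b"
  shows "infnorm (x - c) \<le> 4 * sqrt 3 * rc / t_f"
proof -
  have b: "sqrt 3 * box_radius b * t_f / 2 < rc" by (rule susp_bound[OF tf R s])
  have cin: "infnorm (c - box_center b) \<le> box_radius b" using s unfolding suspended_def box_set_def by auto
  have xin: "infnorm (x - box_center b) \<le> 5 * box_radius b" using x unfolding near_nbhd_def by simp
  have "infnorm (x - c) \<le> infnorm (x - box_center b) + infnorm (box_center b - c)"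
    using infnorm_triangle[of "x - box_center b" "box_center b - c"] by simp
  also have "\<dots> \<le> 6 * box_radius b" using cin xin infnorm_sub[of c "box_center b"] by linarith
  also have "\<dots> \<le> 4 * sqrt 3 * rc / t_f"
  proof -
    have "6 * box_radius b * t_f = 4 * sqrt 3 * (sqrt 3 * box_radius b * t_f / 2)"
      by (simp add: algebra_simps)
    also have "\<dots> \<le> 4 * sqrt 3 * rc" using b by (intro mult_left_mono) auto
    finally show ?thesis using tf by (simp add: field_simps)
  qed
  finally show ?thesis .
qed

theorem mainTheorem5:
  fixes t_f :: real and S C :: "(real^3) set" and r :: "real^3 \<Rightarrow> real"
    and own :: "real^3 \<Rightarrow> box"
  assumes "t_f > 0"
    and "finite S" and "finite C" and "C \<noteq> {}"
    and "\<forall>c\<in>C. r c > 0"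
    and "\<forall>c\<in>C. box_radius (own c) > 0"
    and "\<forall>c\<in>C. c \<in> box_set (own c)"
  shows "real (card {(s, c) \<in> S \<times> C. suspended t_f c (r c) (own c) \<and> s \<in> near_nbhd 2 (own c)})
           \<le> real (card C) * M_C t_f S C r"
proof -
  define T where "T c = S \<inter> {x. infnorm (x - c) \<le> 4 * sqrt 3 * r c / t_f}" for c
  define P where "P = {(s, c) \<in> S \<times> C. suspended t_f c (r c) (own c) \<and> s \<in> near_nbhd 2 (own c)}"
  have sub: "P \<subseteq> (\<lambda>(c,s). (s,c)) ` (SIGMA c:C. T c)"
  proof
    fix p assume "p \<in> P"
    then obtain s c where p: "p = (s,c)" "s \<in> S" "c \<in> C" "suspended t_f c (r c) (own c)"
      "s \<in> near_nbhd 2 (own c)" unfolding P_def by auto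
    have "infnorm (s - c) \<le> 4 * sqrt 3 * r c / t_f"
      using near_sub[OF assms(1) _ p(4) p(5)] assms(6) p(3) by auto
    then have "(c, s) \<in> (SIGMA c:C. T c)" using p unfolding T_def by auto
    then show "p \<in> (\<lambda>(c,s). (s,c)) ` (SIGMA c:C. T c)" using p(1) by force
  qed
  have fin: "finite (SIGMA c:C. T c)" using assms(2,3) unfolding T_def by auto
  have "card P \<le> card ((\<lambda>(c,s). (s,c)) ` (SIGMA c:C. T c))"
    by (rule card_mono[OF finite_imageI[OF fin] sub])
  also have "\<dots> \<le> card (SIGMA c:C. T c)" by (rule card_image_le[OF fin])
  also have "\<dots> = (\<Sum>c\<in>C. card (T c))" using assms(2,3) unfolding T_def by (simp add: card_SigmaI)
  finally have "real (card P) \<le> (\<Sum>c\<in>C. real (card (T c)))" by (metis of_nat_le_iff of_nat_sum)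
  moreover have "real (card C) * M_C t_f S C r = (\<Sum>c\<in>C. real (card (T c)))"
    unfolding M_C_def T_def using assms(3,4) by simp
  ultimately show ?thesis unfolding P_def by simp
qed

end
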